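(* There is no medial T2R semigroup, i.e. no T2R semigroup satisfies the identity $axyb=ayxb$ for all $a,b,x,y$.
   Context: A semigroup $S$ is a $\Delta$-semigroup if the lattice of all congruences of $S$ is a chain with respect to inclusion. A semigroup $N$ with zero $0$ is nil if every element has some power equal to $0$; non-trivial means having more than one element. A T2R semigroup is a $\Delta$-semigroup $S$ which is the disjoint union of a non-trivial nil ideal $S_0$ (with zero $0$, which is then the zero of $S$) and a subsemigroup $S_1=\{u,v\}$, $u\neq v$, which is a right zero semigroup ($xy=y$ for $x,y\in S_1$). *)

theory Defs
  imports Main
begin

definition semigroup_on :: "'a set \<Rightarrow> ('a \<Rightarrow> 'a \<Rightarrow> 'a) \<Rightarrow> bool" where
  "semigroup_on S f \<longleftrightarrow> (\<forall>x\<in>S. \<forall>y\<in>S. f x y \<in> S) \<and>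
     (\<forall>x\<in>S. \<forall>y\<in>S. \<forall>z\<in>S. f (f x y) z = f x (f y z))"

definition congruence_on :: "'a set \<Rightarrow> ('a \<Rightarrow> 'a \<Rightarrow> 'a) \<Rightarrow> 'a rel \<Rightarrow> bool" where
  "congruence_on S f \<rho> \<longleftrightarrow> equiv S \<rho> \<and>
     (\<forall>a\<in>S. \<forall>b\<in>S. \<forall>c\<in>S. (a, b) \<in> \<rho> \<longrightarrow> (f c a, f c b) \<in> \<rho> \<and> (f a c, f b c) \<in> \<rho>)"

definition Delta_semigroup :: "'a set \<Rightarrow> ('a \<Rightarrow> 'a \<Rightarrow> 'a) \<Rightarrow> bool" where
  "Delta_semigroup S f \<longleftrightarrow> semigroup_on S f \<and>
     (\<forall>\<rho> \<sigma>. congruence_on S f \<rho> \<and> congruence_on S f \<sigma> \<longrightarrow> \<rho> \<subseteq> \<sigma> \<or> \<sigma> \<subseteq> \<rho>)"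

(* n-th power, n >= 1: spow f x 0 = x, spow f x (Suc n) = x^(n+2) *)
primrec spow :: "('a \<Rightarrow> 'a \<Rightarrow> 'a) \<Rightarrow> 'a \<Rightarrow> nat \<Rightarrow> 'a" where
  "spow f x 0 = x"
| "spow f x (Suc n) = f (spow f x n) x"

definition nil_with_zero :: "'a set \<Rightarrow> ('a \<Rightarrow> 'a \<Rightarrow> 'a) \<Rightarrow> 'a \<Rightarrow> bool" where
  "nil_with_zero N f z \<longleftrightarrow> z \<in> N \<and> (\<forall>x\<in>N. f z x = z \<and> f x z = z) \<and>
     (\<forall>x\<in>N. \<exists>n. spow f x n = z)"

definition ideal_of :: "'a set \<Rightarrow> ('a \<Rightarrow> 'a \<Rightarrow> 'a) \<Rightarrow> 'a set \<Rightarrow> bool" where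
  "ideal_of S f I \<longleftrightarrow> I \<subseteq> S \<and> I \<noteq> {} \<and>
     (\<forall>s\<in>S. \<forall>x\<in>I. f s x \<in> I \<and> f x s \<in> I)"

definition T2R :: "'a set \<Rightarrow> ('a \<Rightarrow> 'a \<Rightarrow> 'a) \<Rightarrow> bool" where
  "T2R S f \<longleftrightarrow> Delta_semigroup S f \<and>
     (\<exists>S0 u v z. S = S0 \<union> {u, v} \<and> u \<notin> S0 \<and> v \<notin> S0 \<and> u \<noteq> v \<and>
        ideal_of S f S0 \<and> nil_with_zero S0 f z \<and> (\<exists>x\<in>S0. x \<noteq> z) \<and>
        (\<forall>x\<in>{u, v}. \<forall>y\<in>{u, v}. f x y = y))"

definition medial_on :: "'a set \<Rightarrow> ('a \<Rightarrow> 'a \<Rightarrow> 'a) \<Rightarrow> bool" where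
  "medial_on S f \<longleftrightarrow> (\<forall>a\<in>S. \<forall>b\<in>S. \<forall>x\<in>S. \<forall>y\<in>S.
     f (f (f a x) y) b = f (f (f a y) x) b)"

end

theory Submission
  imports Defs
begin

theorem mainTheorem11:
  fixes S :: "'a set" and f :: "'a \<Rightarrow> 'a \<Rightarrow> 'a"
  assumes "T2R S f"
  shows "\<not> medial_on S f"
proof
  assume med: "medial_on S f"
  from assms have D: "Delta_semigroup S f" unfolding T2R_def by blast
  from assms obtain S0 u v z where SS: "S = S0 \<union> {u, v}" and uS0: "u \<notin> S0" and vS0: "v \<notin> S0"
    and uv: "u \<noteq> v" and id: "ideal_of S f S0" and nil: "nil_with_zero S0 f z"
    and nt: "\<exists>x\<in>S0. x \<noteq> z" and rz: "\<forall>x\<in>{u, v}. \<forall>y\<in>{u, v}. f x y = y"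
    unfolding T2R_def by blast
  have sg: "semigroup_on S f" using D unfolding Delta_semigroup_def by blast
  have cl: "\<And>x y. x \<in> S \<Longrightarrow> y \<in> S \<Longrightarrow> f x y \<in> S" using sg unfolding semigroup_on_def by blast
  have as: "\<And>x y w. x \<in> S \<Longrightarrow> y \<in> S \<Longrightarrow> w \<in> S \<Longrightarrow> f (f x y) w = f x (f y w)"
    using sg unfolding semigroup_on_def by blast
  have chain: "\<And>\<rho> \<sigma>. congruence_on S f \<rho> \<Longrightarrow> congruence_on S f \<sigma> \<Longrightarrow> \<rho> \<subseteq> \<sigma> \<or> \<sigma> \<subseteq> \<rho>"
    using D unfolding Delta_semigroup_def by blast
  have S0S: "S0 \<subseteq> S" using SS by blast
  have uS: "u \<in> S" and vS: "v \<in> S" using SS by auto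
  have idl: "\<And>s x. s \<in> S \<Longrightarrow> x \<in> S0 \<Longrightarrow> f s x \<in> S0 \<and> f x s \<in> S0"
    using id unfolding ideal_of_def by blast
  have zS0: "z \<in> S0" and zz: "\<And>x. x \<in> S0 \<Longrightarrow> f z x = z \<and> f x z = z"
    using nil unfolding nil_with_zero_def by auto
  have uu: "f u u = u" and uvv: "f u v = v" and vu: "f v u = u" and vv: "f v v = v" using rz by auto
  have ub: "f u b = f v b" if "b \<in> S" for b
  proof -
    have "f (f (f u u) v) b = f (f (f u v) u) b"
      using med uS vS that unfolding medial_on_def by blast
    thus ?thesis using uu uvv vu by simp
  qed
  have zw: "f z w = z" if "w \<in> S" for w
  proof -
    have "f z w = f (f z z) w" using zz zS0 by simp
    also have "\<dots> = f z (f z w)" using as zS0 S0S that by blast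
    also have "\<dots> = z" using zz idl that zS0 by blast
    finally show ?thesis .
  qed
  define rho where "rho = (S0 \<times> S0) \<union> Id_on S"
  have crho: "congruence_on S f rho"
    unfolding congruence_on_def rho_def
  proof (intro conjI ballI impI)
    show "equiv S (S0 \<times> S0 \<union> Id_on S)"
      unfolding equiv_def refl_on_def sym_def trans_def using S0S by blast
  next
    fix a b c assume "a \<in> S" "b \<in> S" "c \<in> S" "(a, b) \<in> S0 \<times> S0 \<union> Id_on S"
    then show "(f c a, f c b) \<in> S0 \<times> S0 \<union> Id_on S" "(f a c, f b c) \<in> S0 \<times> S0 \<union> Id_on S"
      using idl cl by auto
  qed
  define sig where "sig = {(x, y). x \<in> S \<and> y \<in> S \<and> (\<forall>b\<in>S. f x b = f y b)}"
  have csig: "congruence_on S f sig"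
    unfolding congruence_on_def sig_def
  proof (intro conjI ballI impI)
    show "equiv S {(x, y). x \<in> S \<and> y \<in> S \<and> (\<forall>b\<in>S. f x b = f y b)}"
      unfolding equiv_def refl_on_def sym_def trans_def by auto
  next
    fix a b c assume H: "a \<in> S" "b \<in> S" "c \<in> S" "(a, b) \<in> {(x, y). x \<in> S \<and> y \<in> S \<and> (\<forall>b\<in>S. f x b = f y b)}"
    show "(f c a, f c b) \<in> {(x, y). x \<in> S \<and> y \<in> S \<and> (\<forall>b\<in>S. f x b = f y b)}"
      using H cl as by auto
    show "(f a c, f b c) \<in> {(x, y). x \<in> S \<and> y \<in> S \<and> (\<forall>b\<in>S. f x b = f y b)}"
      using H cl as by auto
  qed
  have "(u, v) \<in> sig" using ub uS vS unfolding sig_def by auto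
  moreover have "(u, v) \<notin> rho" using uS0 uv unfolding rho_def by auto
  ultimately have "rho \<subseteq> sig" using chain[OF crho csig] by blast
  hence cuv: "f c u = f c v" if "c \<in> S0" for c
  proof -
    have "(c, z) \<in> rho" using that zS0 unfolding rho_def by auto
    hence "(c, z) \<in> sig" using \<open>rho \<subseteq> sig\<close> by blast
    hence "f c u = f z u" "f c v = f z v" using uS vS unfolding sig_def by auto
    thus ?thesis using zw uS vS by simp
  qed
  define del where "del = Id_on S \<union> {u, v} \<times> {u, v}"
  have cdel: "congruence_on S f del"
    unfolding congruence_on_def del_def
  proof (intro conjI ballI impI)
    show "equiv S (Id_on S \<union> {u, v} \<times> {u, v})"
      unfolding equiv_def refl_on_def sym_def trans_def using uS vS by blast
  next
    fix a b c assume H: "a \<in> S" "b \<in> S" "c \<in> S" "(a, b) \<in> Id_on S \<union> {u, v} \<times> {u, v}"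
    have c1: "f c u = f c v \<or> (f c u \<in> {u,v} \<and> f c v \<in> {u,v})"
      using H(3) SS cuv rz by auto
    show "(f c a, f c b) \<in> Id_on S \<union> {u, v} \<times> {u, v}"
      using H c1 cl uS vS by auto
    have "f u c = f v c" using ub H(3) by simp
    then show "(f a c, f b c) \<in> Id_on S \<union> {u, v} \<times> {u, v}"
      using H cl uS vS by auto
  qed
  obtain x where x: "x \<in> S0" "x \<noteq> z" using nt by blast
  have "(x, z) \<in> rho" "(x, z) \<notin> del" using x zS0 S0S uS0 vS0 unfolding rho_def del_def by auto
  moreover have "(u, v) \<in> del" "(u, v) \<notin> rho" using uS vS uS0 uv unfolding rho_def del_def by auto
  ultimately show False using chain[OF crho cdel] by blast
qed

end
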